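(* Let $n\in\mathbb{N}$ and $1\le t\le 2^n$. Let $T$ be a uniformly random subset of $\mathbb{F}_2^n$ of size $|T|=t$, and let $k$ be a uniformly random element of $T$. For $0\le d\le n$ let $\#_d(k)=|\{z\in T:d_H(z,k)=d\}|$, with $d_H$ the Hamming distance. Then for all integers $x$, $$P(\#_d(k)=x)=\begin{cases}1 & d=0\wedge x=1,\\ 0 & d=0\wedge x\ne1,\\ \mathrm{hypgeom}(\mathbf X,\mathbf x) & \text{otherwise},\end{cases}$$ with $\mathbf X=\left(\binom nd,\,2^n-1-\binom nd\right)$ and $\mathbf x=(x,\,|T|-1-x)$. Moreover, for $0\le d_1,d_2\le n$ and integers $x_1,x_2$, $$P(\#_{d_1}(k)=x_1,\#_{d_2}(k)=x_2)=\begin{cases}P(\#_{d_1}(k)=x_1)P(\#_{d_2}(k)=x_2) & d_1=0\vee d_2=0,\\ P(\#_{d_1}(k)=x_1) & d_1=d_2\wedge x_1=x_2,\\ 0 & d_1=d_2\wedge x_1\ne x_2,\\ \mathrm{hypgeom}(\mathbf X,\mathbf x) & \text{otherwise},\end{cases}$$ with $\mathbf X=\left(\binom n{d_1},\binom n{d_2},\,2^n-1-\binom n{d_1}-\binom n{d_2}\right)$ and $\mathbf x=(x_1,x_2,\,|T|-1-x_1-x_2)$.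
   Context: $\mathrm{hypgeom}(\mathbf X,\mathbf x)$ is the multivariate hypergeometric probability: for an urn with $X_i$ balls of colour $i$ ($i=1,\dots,m$), $N=\sum_iX_i$, drawing $s=\sum_ix_i$ balls without replacement, the probability of obtaining exactly $x_i$ balls of colour $i$ for all $i$ is $\prod_{i=1}^m\binom{X_i}{x_i}\big/\binom{N}{s}$ (taken to be $0$ when some $x_i<0$). *)

theory Defs
  imports "HOL-Probability.Probability"
begin

(* F_2^n is modelled as the set of boolean lists of length n. *)
definition cube :: "nat \<Rightarrow> bool list set" where
  "cube n = {v. length v = n}"

definition hamming :: "bool list \<Rightarrow> bool list \<Rightarrow> nat" where
  "hamming z k = card {i. i < length z \<and> z ! i \<noteq> k ! i}"

definition hypgeom :: "int list \<Rightarrow> int list \<Rightarrow> real" where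
  "hypgeom X x =
     (if (\<exists>i<length x. x ! i < 0) then 0
      else (\<Prod>i<length X. real (nat (X ! i) choose nat (x ! i)))
           / real (nat (sum_list X) choose nat (sum_list x)))"

definition rand_exp :: "nat \<Rightarrow> nat \<Rightarrow> (bool list set \<times> bool list) pmf" where
  "rand_exp n t =
     bind_pmf (pmf_of_set {T. T \<subseteq> cube n \<and> card T = t})
       (\<lambda>T. map_pmf (\<lambda>k. (T, k)) (pmf_of_set T))"

definition cnt :: "bool list set \<Rightarrow> bool list \<Rightarrow> nat \<Rightarrow> nat" where
  "cnt T k d = card {z \<in> T. hamming z k = d}"

definition P1 :: "nat \<Rightarrow> nat \<Rightarrow> nat \<Rightarrow> int \<Rightarrow> real" where
  "P1 n t d x = measure_pmf.prob (rand_exp n t) {(T, k). int (cnt T k d) = x}"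

definition P2 :: "nat \<Rightarrow> nat \<Rightarrow> nat \<Rightarrow> int \<Rightarrow> nat \<Rightarrow> int \<Rightarrow> real" where
  "P2 n t d1 x1 d2 x2 = measure_pmf.prob (rand_exp n t)
      {(T, k). int (cnt T k d1) = x1 \<and> int (cnt T k d2) = x2}"

end

theory Submission
  imports Defs
begin

lemma card_cube: "card (cube n) = 2 ^ n" and finite_cube: "finite (cube n)"
proof -
  have "cube n = {xs. set xs \<subseteq> (UNIV::bool set) \<and> length xs = n}" by (auto simp: cube_def)
  then show "card (cube n) = 2 ^ n" "finite (cube n)"
    using card_lists_length_eq[of "UNIV::bool set" n] finite_lists_length_eq[of "UNIV::bool set" n]
    by simp_all
qed

lemma prob_rand:
  assumes "t \<le> 2 ^ n" "1 \<le> t"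
  shows "measure_pmf.prob (rand_exp n t) E =
    real (card {(T,k). T \<subseteq> cube n \<and> card T = t \<and> k \<in> T \<and> (T,k) \<in> E}) / (real t * real (2 ^ n choose t))"
proof -
  define TT where "TT = {T. T \<subseteq> cube n \<and> card T = t}"
  have fin: "finite TT" using finite_cube unfolding TT_def by (auto intro: rev_finite_subset[of "Pow (cube n)"])
  have cTT: "card TT = 2 ^ n choose t" unfolding TT_def using n_subsets[OF finite_cube] card_cube by simp
  have ne: "TT \<noteq> {}"
  proof -
    obtain S where "S \<subseteq> cube n" "card S = t" using obtain_subset_with_card_n[of t "cube n"] assms card_cube by auto
    then show ?thesis unfolding TT_def by auto
  qed
  have Tfin: "finite T" "T \<noteq> {}" "card T = t" if "T \<in> TT" for T
    using that assms finite_cube unfolding TT_def by (auto intro: rev_finite_subset)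
  have "measure_pmf.prob (rand_exp n t) E =
     (LINT T|measure_pmf (pmf_of_set TT). measure_pmf.prob (map_pmf (\<lambda>k. (T, k)) (pmf_of_set T)) E)"
    unfolding rand_exp_def TT_def[symmetric] measure_pmf_bind
    by (rule subprob_space.measure_bind[OF subprob_space_measure_pmf, where N="count_space UNIV"])
       (auto simp: space_subprob_algebra subprob_space_measure_pmf)
  also have "\<dots> = (\<Sum>T\<in>TT. real (card (T \<inter> (\<lambda>k. (T, k)) -` E)) / real t) / real (card TT)"
    using fin ne Tfin by (simp add: integral_pmf_of_set measure_pmf_of_set cong: sum.cong)
  also have "(\<Sum>T\<in>TT. real (card (T \<inter> (\<lambda>k. (T, k)) -` E)) / real t) =
      real (\<Sum>T\<in>TT. card (T \<inter> (\<lambda>k. (T, k)) -` E)) / real t"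
    by (simp add: sum_divide_distrib)
  also have "(\<Sum>T\<in>TT. card (T \<inter> (\<lambda>k. (T, k)) -` E)) = card (SIGMA T:TT. T \<inter> (\<lambda>k. (T, k)) -` E)"
    using fin Tfin by (subst card_SigmaI) auto
  also have "(SIGMA T:TT. T \<inter> (\<lambda>k. (T, k)) -` E) = {(T,k). T \<subseteq> cube n \<and> card T = t \<and> k \<in> T \<and> (T,k) \<in> E}"
    unfolding TT_def by auto
  finally show ?thesis using cTT by (simp add: field_simps)
qed

lemma count3:
  assumes U: "finite U" and AB: "A \<subseteq> U" "B \<subseteq> U" "A \<inter> B = {}" and x: "x1 + x2 \<le> s"
  shows "card {S. S \<subseteq> U \<and> card S = s \<and> card (S \<inter> A) = x1 \<and> card (S \<inter> B) = x2}
       = (card A choose x1) * (card B choose x2) * (card (U - A - B) choose (s - x1 - x2))"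
proof -
  let ?L = "{S. S \<subseteq> U \<and> card S = s \<and> card (S \<inter> A) = x1 \<and> card (S \<inter> B) = x2}"
  let ?R = "{P. P \<subseteq> A \<and> card P = x1} \<times> {Q. Q \<subseteq> B \<and> card Q = x2} \<times> {R. R \<subseteq> U - A - B \<and> card R = s - x1 - x2}"
  have fA: "finite A" "finite B" "finite (U - A - B)" using U AB by (auto intro: rev_finite_subset)
  have splitcard: "card S = card (S \<inter> A) + card (S \<inter> B) + card (S - A - B)" if "S \<subseteq> U" for S
  proof -
    have fS: "finite S" using that U by (auto intro: rev_finite_subset)
    have "S = ((S \<inter> A) \<union> (S \<inter> B)) \<union> (S - A - B)" by auto
    then have "card S = card ((S \<inter> A) \<union> (S \<inter> B)) + card (S - A - B)"
      using fS by (subst card_Un_disjoint[symmetric]) auto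
    also have "card ((S \<inter> A) \<union> (S \<inter> B)) = card (S \<inter> A) + card (S \<inter> B)"
      using fS AB by (intro card_Un_disjoint) auto
    finally show ?thesis .
  qed
  have "bij_betw (\<lambda>S. (S \<inter> A, S \<inter> B, S - A - B)) ?L ?R"
  proof (rule bij_betw_byWitness[where f'="\<lambda>(P, Q, R). P \<union> Q \<union> R"])
    show "\<forall>S\<in>?L. (\<lambda>(P, Q, R). P \<union> Q \<union> R) (S \<inter> A, S \<inter> B, S - A - B) = S" by auto
    show "\<forall>a'\<in>?R. (\<lambda>S. (S \<inter> A, S \<inter> B, S - A - B)) ((\<lambda>(P, Q, R). P \<union> Q \<union> R) a') = a'"
      using AB by auto
    show "(\<lambda>S. (S \<inter> A, S \<inter> B, S - A - B)) ` ?L \<subseteq> ?R"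
      using splitcard by auto
    have mem: "P \<union> Q \<union> R \<in> ?L"
      if h: "P \<subseteq> A" "card P = x1" "Q \<subseteq> B" "card Q = x2" "R \<subseteq> U - A - B" "card R = s - x1 - x2" for P Q R
    proof -
      have e1: "(P \<union> Q \<union> R) \<inter> A = P" "(P \<union> Q \<union> R) \<inter> B = Q" "(P \<union> Q \<union> R) - A - B = R"
        using h AB by auto
      have "P \<union> Q \<union> R \<subseteq> U" using h AB by auto
      moreover from this have "card (P \<union> Q \<union> R) = s" using splitcard[of "P \<union> Q \<union> R"] e1 h x by simp
      ultimately show ?thesis using e1 h by simp
    qed
    show "(\<lambda>(P, Q, R). P \<union> Q \<union> R) ` ?R \<subseteq> ?L"
    proof
      fix y assume "y \<in> (\<lambda>(P, Q, R). P \<union> Q \<union> R) ` ?R"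
      then obtain P Q R where "(P, Q, R) \<in> ?R" "y = P \<union> Q \<union> R" by auto
      then show "y \<in> ?L" using mem by blast
    qed
  qed
  then have "card ?L = card ?R" by (rule bij_betw_same_card)
  also have "\<dots> = (card A choose x1) * (card B choose x2) * (card (U - A - B) choose (s - x1 - x2))"
    using fA by (simp add: card_cartesian_product n_subsets)
  finally show ?thesis .
qed

lemma card_sphere:
  assumes k: "k \<in> cube n"
  shows "card {z \<in> cube n. hamming z k = d} = n choose d"
proof -
  let ?f = "\<lambda>z. {i. i < n \<and> z ! i \<noteq> k ! i}"
  let ?g = "\<lambda>D. map (\<lambda>i. if i \<in> D then \<not> k ! i else k ! i) [0..<n]"
  have "bij_betw ?f {z \<in> cube n. hamming z k = d} {D. D \<subseteq> {..<n} \<and> card D = d}"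
  proof (rule bij_betw_byWitness[where f'="?g"])
    show "\<forall>a\<in>{z \<in> cube n. hamming z k = d}. ?g (?f a) = a"
      by (auto simp: cube_def intro!: nth_equalityI)
    show "\<forall>a'\<in>{D. D \<subseteq> {..<n} \<and> card D = d}. ?f (?g a') = a'"
      by auto
    show "?f ` {z \<in> cube n. hamming z k = d} \<subseteq> {D. D \<subseteq> {..<n} \<and> card D = d}"
      by (auto simp: cube_def hamming_def)
    show "?g ` {D. D \<subseteq> {..<n} \<and> card D = d} \<subseteq> {z \<in> cube n. hamming z k = d}"
    proof safe
      fix D assume h: "D \<subseteq> {..<n}" "d = card D"
      show "?g D \<in> cube n" by (simp add: cube_def)
      have "{i. i < length (?g D) \<and> ?g D ! i \<noteq> k ! i} = D" using h by auto
      then show "hamming (?g D) k = card D" by (simp add: hamming_def)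
    qed
  qed
  then have "card {z \<in> cube n. hamming z k = d} = card {D. D \<subseteq> {..<n} \<and> card D = d}"
    by (rule bij_betw_same_card)
  then show ?thesis by (simp add: n_subsets)
qed


lemma pair_count:
  assumes t: "1 \<le> t"
   and AB: "\<And>k. k \<in> cube n \<Longrightarrow> A k \<subseteq> cube n - {k} \<and> B k \<subseteq> cube n - {k} \<and> A k \<inter> B k = {} \<and> card (A k) = a \<and> card (B k) = b"
   and x: "x1 + x2 \<le> t - 1"
  shows "card {(T,k). T \<subseteq> cube n \<and> card T = t \<and> k \<in> T \<and> (T,k) \<in> {(T,k). card (T \<inter> A k) = x1 \<and> card (T \<inter> B k) = x2}}
     = 2^n * ((a choose x1) * (b choose x2) * ((2^n - 1 - a - b) choose (t - 1 - x1 - x2)))"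
proof -
  let ?X = "{(T,k). T \<subseteq> cube n \<and> card T = t \<and> k \<in> T \<and> (T,k) \<in> {(T,k). card (T \<inter> A k) = x1 \<and> card (T \<inter> B k) = x2}}"
  let ?F = "\<lambda>k. {S. S \<subseteq> cube n - {k} \<and> card S = t - 1 \<and> card (S \<inter> A k) = x1 \<and> card (S \<inter> B k) = x2}"
  let ?Y = "SIGMA k:cube n. ?F k"
  have fS: "finite S" if "S \<subseteq> cube n" for S using that finite_cube by (rule rev_finite_subset[rotated])
  have "bij_betw (\<lambda>(k,S). (insert k S, k)) ?Y ?X"
  proof (rule bij_betw_byWitness[where f'="\<lambda>(T,k). (k, T - {k})"])
    show "\<forall>a\<in>?Y. (\<lambda>(T,k). (k, T - {k})) ((\<lambda>(k,S). (insert k S, k)) a) = a" by auto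
    show "\<forall>a\<in>?X. (\<lambda>(k,S). (insert k S, k)) ((\<lambda>(T,k). (k, T - {k})) a) = a" by auto
    have m1: "(insert k S, k) \<in> ?X" if "k \<in> cube n" "S \<in> ?F k" for k S
    proof -
      have "finite S" "k \<notin> S" using that fS by auto
      then have "card (insert k S) = t" using that t by simp
      moreover have "insert k S \<inter> A k = S \<inter> A k" "insert k S \<inter> B k = S \<inter> B k" using AB[OF that(1)] by auto
      ultimately show ?thesis using that by auto
    qed
    show "(\<lambda>(k,S). (insert k S, k)) ` ?Y \<subseteq> ?X" using m1 by auto
    have m2: "(k, T - {k}) \<in> ?Y" if "(T, k) \<in> ?X" for T k
    proof -
      have h: "T \<subseteq> cube n" "card T = t" "k \<in> T" "card (T \<inter> A k) = x1" "card (T \<inter> B k) = x2" using that by auto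
      then have kc: "k \<in> cube n" by auto
      have "card (T - {k}) = t - 1" using h fS by simp
      moreover have "(T - {k}) \<inter> A k = T \<inter> A k" "(T - {k}) \<inter> B k = T \<inter> B k" using AB[OF kc] by auto
      ultimately show ?thesis using h kc by auto
    qed
    show "(\<lambda>(T,k). (k, T - {k})) ` ?X \<subseteq> ?Y"
    proof
      fix y assume "y \<in> (\<lambda>(T,k). (k, T - {k})) ` ?X"
      then obtain T k where "(T, k) \<in> ?X" "y = (k, T - {k})" by auto
      then show "y \<in> ?Y" using m2 by blast
    qed
  qed
  then have "card ?X = card ?Y" by (simp add: bij_betw_same_card)
  also have "\<dots> = (\<Sum>k\<in>cube n. card (?F k))"
    using finite_cube fS by (subst card_SigmaI) auto
  also have "\<dots> = (\<Sum>k\<in>cube n. (a choose x1) * (b choose x2) * ((2^n - 1 - a - b) choose (t - 1 - x1 - x2)))"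
  proof (rule sum.cong[OF refl])
    fix k assume kc: "k \<in> cube n"
    note ab = AB[OF kc]
    have fU: "finite (cube n - {k})" using finite_cube by simp
    have cU: "card (cube n - {k}) = 2^n - 1" using kc card_cube finite_cube by simp
    have "cube n - {k} - A k - B k = (cube n - {k}) - (A k \<union> B k)" by auto
    moreover have "card ((cube n - {k}) - (A k \<union> B k)) = card (cube n - {k}) - card (A k \<union> B k)"
      using ab fU by (intro card_Diff_subset) (auto intro: rev_finite_subset)
    moreover have "card (A k \<union> B k) = a + b"
      using ab fU by (subst card_Un_disjoint) (auto intro: rev_finite_subset)
    ultimately have "card (cube n - {k} - A k - B k) = 2^n - 1 - a - b" using cU by simp
    then show "card (?F k) = (a choose x1) * (b choose x2) * ((2^n - 1 - a - b) choose (t - 1 - x1 - x2))"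
      using count3[OF fU _ _ _ x, of "A k" "B k"] ab by simp
  qed
  also have "\<dots> = 2^n * ((a choose x1) * (b choose x2) * ((2^n - 1 - a - b) choose (t - 1 - x1 - x2)))"
    using card_cube by simp
  finally show ?thesis .
qed


lemma natsub3: "(1::nat) \<le> N \<Longrightarrow> a + b \<le> N - 1 \<Longrightarrow> nat (int N - 1 - int a - int b) = N - 1 - a - b"
  by arith

lemma natsub1: "nat (int N - 1) = N - 1"
  by arith

lemma aux_cancel: "(0::nat) < p \<Longrightarrow> real (p * X) / (real p * real C) = real X / real C"
  by simp

lemma prob3:
  assumes t: "1 \<le> t" "t \<le> 2 ^ n"
   and AB: "\<And>k. k \<in> cube n \<Longrightarrow> A k \<subseteq> cube n - {k} \<and> B k \<subseteq> cube n - {k} \<and> A k \<inter> B k = {} \<and> card (A k) = a \<and> card (B k) = b"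
  shows "measure_pmf.prob (rand_exp n t) {(T,k). int (card (T \<inter> A k)) = x1 \<and> int (card (T \<inter> B k)) = x2}
    = hypgeom [int a, int b, 2 ^ n - 1 - int a - int b] [x1, x2, int t - 1 - x1 - x2]"
proof -
  have fS: "finite S" if "S \<subseteq> cube n" for S using that finite_cube by (rule rev_finite_subset[rotated])
  have k0: "replicate n False \<in> cube n" by (simp add: cube_def)
  have abU: "a + b \<le> 2 ^ n - 1"
  proof -
    note ab = AB[OF k0]
    have "card (A (replicate n False) \<union> B (replicate n False)) \<le> card (cube n - {replicate n False})"
      using ab finite_cube by (intro card_mono) auto
    moreover have "card (A (replicate n False) \<union> B (replicate n False)) = a + b"
      using ab fS by (subst card_Un_disjoint) auto
    ultimately show ?thesis using k0 card_cube finite_cube by simp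
  qed
  have pos: "(0::nat) < 2 ^ n" by simp
  show ?thesis
  proof (cases "x1 < 0 \<or> x2 < 0 \<or> int t - 1 - x1 - x2 < 0")
    case True
    have empty: "{(T,k). T \<subseteq> cube n \<and> card T = t \<and> k \<in> T \<and> (T,k) \<in> {(T,k). int (card (T \<inter> A k)) = x1 \<and> int (card (T \<inter> B k)) = x2}} = {}"
    proof (rule ccontr)
      assume "\<not> ?thesis"
      then obtain T k where h: "T \<subseteq> cube n" "card T = t" "k \<in> T" "int (card (T \<inter> A k)) = x1" "int (card (T \<inter> B k)) = x2" by auto
      have kc: "k \<in> cube n" using h by auto
      note ab = AB[OF kc]
      have "card (T \<inter> A k) + card (T \<inter> B k) = card ((T \<inter> A k) \<union> (T \<inter> B k))"
        using ab h fS by (subst card_Un_disjoint) auto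
      also have "\<dots> \<le> card (T - {k})" using ab h fS by (intro card_mono) auto
      also have "\<dots> = t - 1" using h fS by simp
      finally show False using True h t by linarith
    qed
    have "hypgeom [int a, int b, 2 ^ n - 1 - int a - int b] [x1, x2, int t - 1 - x1 - x2] = 0"
      using True unfolding hypgeom_def by (auto simp: less_Suc_eq_0_disj numeral_3_eq_3 exI[of _ 0])
    then show ?thesis unfolding prob_rand[OF t(2) t(1)] empty by simp
  next
    case False
    define m1 where "m1 = nat x1"
    define m2 where "m2 = nat x2"
    have m12: "x1 = int m1" "x2 = int m2" using False unfolding m1_def m2_def by simp_all
    have "int (m1 + m2) \<le> int (t - 1)" using False t m12 by (simp add: of_nat_diff)
    then have m: "x1 = int m1" "x2 = int m2" "m1 + m2 \<le> t - 1" using m12 by simp_all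
    have ev: "{(T,k). int (card (T \<inter> A k)) = x1 \<and> int (card (T \<inter> B k)) = x2} = {(T,k). card (T \<inter> A k) = m1 \<and> card (T \<inter> B k) = m2}"
      using m by auto
    have binom: "real t * real (2 ^ n choose t) = real (2 ^ n) * real (2 ^ n - 1 choose (t - 1))"
    proof -
      have s1: "Suc (2^n - 1) = 2^n" using pos by simp
      have s2: "Suc (t - 1) = t" using t by simp
      have "2^n * (2^n - 1 choose (t - 1)) = (2^n choose t) * t"
        using Suc_times_binomial_eq[of "2 ^ n - 1" "t - 1"] unfolding s1 s2 .
      then have "real (2^n * (2^n - 1 choose (t - 1))) = real ((2^n choose t) * t)" by (simp only:)
      then show ?thesis by (simp only: of_nat_mult mult.commute)
    qed
    have "measure_pmf.prob (rand_exp n t) {(T,k). int (card (T \<inter> A k)) = x1 \<and> int (card (T \<inter> B k)) = x2}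
       = real ((a choose m1) * (b choose m2) * ((2^n - 1 - a - b) choose (t - 1 - m1 - m2))) / real (2 ^ n - 1 choose (t - 1))"
      unfolding ev prob_rand[OF t(2) t(1)] binom
      apply (subst pair_count[OF t(1) AB m(3)])
       apply assumption
      by (rule aux_cancel[OF pos])
    also have "\<dots> = hypgeom [int a, int b, 2 ^ n - 1 - int a - int b] [x1, x2, int t - 1 - x1 - x2]"
    proof -
      have e1: "nat (2 ^ n - 1 - int a - int b) = 2 ^ n - 1 - a - b" using abU natsub3[of "2^n" a b] by simp
      have e2: "nat (int t - 1 - x1 - x2) = t - 1 - m1 - m2" using m t by simp
      have e3: "nat (sum_list [int a, int b, 2 ^ n - 1 - int a - int b]) = 2 ^ n - 1"
        using natsub1[of "2^n"] by simp
      have e4: "nat (sum_list [x1, x2, int t - 1 - x1 - x2]) = t - 1" using natsub1[of t] by simp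
      have nn: "\<not> (\<exists>i<length [x1, x2, int t - 1 - x1 - x2]. [x1, x2, int t - 1 - x1 - x2] ! i < 0)"
      proof clarify
        fix i assume i: "i < length [x1, x2, int t - 1 - x1 - x2]" "[x1, x2, int t - 1 - x1 - x2] ! i < 0"
        then have "i = 0 \<or> i = 1 \<or> i = 2" by auto
        then show False using False i by auto
      qed
      have pr: "(\<Prod>i<length [int a, int b, 2 ^ n - 1 - int a - int b].
          real (nat ([int a, int b, 2 ^ n - 1 - int a - int b] ! i) choose nat ([x1, x2, int t - 1 - x1 - x2] ! i)))
        = real (a choose m1) * real (b choose m2) * real ((2^n - 1 - a - b) choose (t - 1 - m1 - m2))"
        using m e1 e2 by (simp add: numeral_3_eq_3 lessThan_Suc)
      show ?thesis unfolding hypgeom_def if_not_P[OF nn] e3 e4 pr by simp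
    qed
    finally show ?thesis .
  qed
qed


lemma prob_cong:
  assumes t: "1 \<le> t" "t \<le> 2 ^ n"
    and h: "\<And>T k. T \<subseteq> cube n \<Longrightarrow> card T = t \<Longrightarrow> k \<in> T \<Longrightarrow> ((T,k) \<in> E \<longleftrightarrow> (T,k) \<in> F)"
  shows "measure_pmf.prob (rand_exp n t) E = measure_pmf.prob (rand_exp n t) F"
proof -
  have "{(T,k). T \<subseteq> cube n \<and> card T = t \<and> k \<in> T \<and> (T,k) \<in> E} = {(T,k). T \<subseteq> cube n \<and> card T = t \<and> k \<in> T \<and> (T,k) \<in> F}"
    using h by blast
  then show ?thesis unfolding prob_rand[OF t(2) t(1)] by simp
qed

lemma hamming_self: "hamming k k = 0"
  by (simp add: hamming_def)

lemma hamming_zero: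
  assumes "length z = length k" "hamming z k = 0"
  shows "z = k"
proof -
  have "finite {i. i < length z \<and> z ! i \<noteq> k ! i}" by simp
  then have "{i. i < length z \<and> z ! i \<noteq> k ! i} = {}" using assms(2) by (simp add: hamming_def)
  then show ?thesis using assms(1) by (auto intro: nth_equalityI)
qed

lemma cnt_eq: "T \<subseteq> cube n \<Longrightarrow> cnt T k d = card (T \<inter> {z \<in> cube n. hamming z k = d})"
  unfolding cnt_def by (rule arg_cong[where f=card]) auto

lemma cnt0: "T \<subseteq> cube n \<Longrightarrow> k \<in> T \<Longrightarrow> cnt T k 0 = 1"
proof -
  assume h: "T \<subseteq> cube n" "k \<in> T"
  have "{z \<in> T. hamming z k = 0} = {k}"
  proof (intro equalityI subsetI)
    fix z assume "z \<in> {z \<in> T. hamming z k = 0}"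
    then have "z \<in> T" "hamming z k = 0" by auto
    moreover have "length z = length k" using h \<open>z \<in> T\<close> unfolding cube_def by auto
    ultimately show "z \<in> {k}" using hamming_zero by auto
  next
    fix z assume "z \<in> {k}" then show "z \<in> {z \<in> T. hamming z k = 0}" using h hamming_self by auto
  qed
  then show ?thesis unfolding cnt_def by simp
qed

lemma hyp32: "hypgeom [A, 0, C] [x, 0, y] = hypgeom [A, C] [x, y]"
proof -
  have ex: "(\<exists>i<length [x, 0, y]. [x, 0, y] ! i < 0) = (\<exists>i<length [x, y]. [x, y] ! i < 0)"
  proof
    assume "\<exists>i<length [x, 0, y]. [x, 0, y] ! i < 0"
    then obtain i where "i < length [x, 0, y]" "[x, 0, y] ! i < 0" by blast
    then have "x < 0 \<or> y < 0" by (cases i; cases "i - 1") auto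
    then show "\<exists>i<length [x, y]. [x, y] ! i < 0"
    proof (elim disjE)
      assume "x < 0" then show ?thesis by (intro exI[of _ 0]) simp
    next
      assume "y < 0" then show ?thesis by (intro exI[of _ "Suc 0"]) simp
    qed
  next
    assume "\<exists>i<length [x, y]. [x, y] ! i < 0"
    then obtain i where "i < length [x, y]" "[x, y] ! i < 0" by blast
    then have "x < 0 \<or> y < 0" by (cases i) auto
    then show "\<exists>i<length [x, 0, y]. [x, 0, y] ! i < 0"
    proof (elim disjE)
      assume "x < 0" then show ?thesis by (intro exI[of _ 0]) simp
    next
      assume "y < 0" then show ?thesis by (intro exI[of _ "Suc (Suc 0)"]) simp
    qed
  qed
  have pr: "(\<Prod>i<length [A, 0, C]. real (nat ([A, 0, C] ! i) choose nat ([x, 0, y] ! i)))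
     = (\<Prod>i<length [A, C]. real (nat ([A, C] ! i) choose nat ([x, y] ! i)))"
    by (simp add: numeral_3_eq_3 lessThan_Suc)
  have s1: "sum_list [A, 0, C] = sum_list [A, C]" "sum_list [x, 0, y] = sum_list [x, y]" by simp_all
  show ?thesis unfolding hypgeom_def ex pr s1 by (rule refl)
qed

theorem lemma3:
  fixes n t d d1 d2 :: nat and x x1 x2 :: int
  assumes "1 \<le> t" and "t \<le> 2 ^ n"
    and "d \<le> n" and "d1 \<le> n" and "d2 \<le> n"
  shows "(P1 n t d x =
           (if d = 0 \<and> x = 1 then 1
            else if d = 0 \<and> x \<noteq> 1 then 0
            else hypgeom [int (n choose d), 2 ^ n - 1 - int (n choose d)]
                         [x, int t - 1 - x])) \<and>
         (P2 n t d1 x1 d2 x2 =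
           (if d1 = 0 \<or> d2 = 0 then P1 n t d1 x1 * P1 n t d2 x2
            else if d1 = d2 \<and> x1 = x2 then P1 n t d1 x1
            else if d1 = d2 \<and> x1 \<noteq> x2 then 0
            else hypgeom [int (n choose d1), int (n choose d2),
                          2 ^ n - 1 - int (n choose d1) - int (n choose d2)]
                         [x1, x2, int t - 1 - x1 - x2]))"
proof -
  note t1 = assms(1) and t2 = assms(2)
  let ?S = "\<lambda>k d. {z \<in> cube n. hamming z k = d}"
  have sph: "?S k d \<subseteq> cube n - {k} \<and> card (?S k d) = n choose d" if "k \<in> cube n" "1 \<le> d" for k d
    using card_sphere[OF that(1)] hamming_self[of k] that(2) by auto
  have pr0: "measure_pmf.prob (rand_exp n t) {} = 0" by simp
  have pr1: "measure_pmf.prob (rand_exp n t) UNIV = 1" by simp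
  have P1pos: "P1 n t d x = hypgeom [int (n choose d), 2^n - 1 - int (n choose d)] [x, int t - 1 - x]"
    if d: "1 \<le> d" for d x
  proof -
    have "P1 n t d x = measure_pmf.prob (rand_exp n t)
        {(T,k). int (card (T \<inter> ?S k d)) = x \<and> int (card (T \<inter> {})) = 0}"
      unfolding P1_def by (rule prob_cong[OF t1 t2]) (simp add: cnt_eq)
    also have "\<dots> = hypgeom [int (n choose d), int 0, 2^n - 1 - int (n choose d) - int 0] [x, 0, int t - 1 - x - 0]"
      by (rule prob3[OF t1 t2, where A="\<lambda>k. ?S k d" and B="\<lambda>k. {}"]) (use sph d in auto)
    also have "\<dots> = hypgeom [int (n choose d), 2^n - 1 - int (n choose d)] [x, int t - 1 - x]"
      using hyp32 by simp
    finally show ?thesis .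
  qed
  have P10: "P1 n t 0 x = (if x = 1 then 1 else 0)" for x
  proof -
    have "P1 n t 0 x = measure_pmf.prob (rand_exp n t) (if x = 1 then UNIV else {})"
      unfolding P1_def by (rule prob_cong[OF t1 t2]) (simp add: cnt0)
    then show ?thesis by simp
  qed
  have part1: "P1 n t d x =
           (if d = 0 \<and> x = 1 then 1
            else if d = 0 \<and> x \<noteq> 1 then 0
            else hypgeom [int (n choose d), 2 ^ n - 1 - int (n choose d)]
                         [x, int t - 1 - x])"
    using P10 P1pos by (cases "d = 0") auto
  have part2: "P2 n t d1 x1 d2 x2 =
           (if d1 = 0 \<or> d2 = 0 then P1 n t d1 x1 * P1 n t d2 x2
            else if d1 = d2 \<and> x1 = x2 then P1 n t d1 x1
            else if d1 = d2 \<and> x1 \<noteq> x2 then 0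
            else hypgeom [int (n choose d1), int (n choose d2),
                          2 ^ n - 1 - int (n choose d1) - int (n choose d2)]
                         [x1, x2, int t - 1 - x1 - x2])"
  proof (cases "d1 = 0")
    case True
    have "P2 n t d1 x1 d2 x2 = measure_pmf.prob (rand_exp n t) (if x1 = 1 then {(T,k). int (cnt T k d2) = x2} else {})"
      unfolding P2_def by (rule prob_cong[OF t1 t2]) (simp add: cnt0 True)
    then show ?thesis using True P10 by (simp add: P1_def)
  next
    case d1: False
    show ?thesis
    proof (cases "d2 = 0")
      case True
      have "P2 n t d1 x1 d2 x2 = measure_pmf.prob (rand_exp n t) (if x2 = 1 then {(T,k). int (cnt T k d1) = x1} else {})"
        unfolding P2_def by (rule prob_cong[OF t1 t2]) (simp add: cnt0 True)
      then show ?thesis using True P10 by (simp add: P1_def)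
    next
      case d2: False
      show ?thesis
      proof (cases "d1 = d2")
        case True
        show ?thesis
        proof (cases "x1 = x2")
          case True
          then show ?thesis using d1 d2 \<open>d1 = d2\<close> by (simp add: P1_def P2_def)
        next
          case False
          have e: "{(T, k). int (cnt T k d1) = x1 \<and> int (cnt T k d2) = x2} = {}"
            using False \<open>d1 = d2\<close> by auto
          have "P2 n t d1 x1 d2 x2 = 0" unfolding P2_def e by simp
          then show ?thesis using d1 d2 False \<open>d1 = d2\<close> by simp
        qed
      next
        case False
        have "P2 n t d1 x1 d2 x2 = measure_pmf.prob (rand_exp n t)
          {(T,k). int (card (T \<inter> ?S k d1)) = x1 \<and> int (card (T \<inter> ?S k d2)) = x2}"
          unfolding P2_def by (rule prob_cong[OF t1 t2]) (simp add: cnt_eq)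
        also have "\<dots> = hypgeom [int (n choose d1), int (n choose d2),
                          2 ^ n - 1 - int (n choose d1) - int (n choose d2)]
                         [x1, x2, int t - 1 - x1 - x2]"
        proof (rule prob3[OF t1 t2, where A="\<lambda>k. ?S k d1" and B="\<lambda>k. ?S k d2"])
          fix k assume k: "k \<in> cube n"
          show "?S k d1 \<subseteq> cube n - {k} \<and> ?S k d2 \<subseteq> cube n - {k} \<and> ?S k d1 \<inter> ?S k d2 = {} \<and>
                card (?S k d1) = n choose d1 \<and> card (?S k d2) = n choose d2"
            using sph[OF k, of d1] sph[OF k, of d2] d1 d2 False by auto
        qed
        finally show ?thesis using d1 d2 False by simp
      qed
    qed
  qed
  show ?thesis using part1 part2 by blast
qed

end
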